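(* In the setting described in the context, let $(u_1,\dots,u_n)\in C(U,W,\alpha)$ and set $\alpha_0=p_1-1$. Then: (1) for $i\in[n]$ and $j\in[0,i]$, $u_i([a,\alpha_j])\subseteq[a,j]$; (2) for every $i\in[n]$, $u_i^{-1}(i)\ge p_i$; (3) for every $i\in[n]$, $u_1^{-1}(i)=u_2^{-1}(i)=\cdots=u_i^{-1}(i)$.
   Context: Permutations: for integers $a\le n$, $S_{[a,n]}$ is the set of bijections of $\mathbb Z$ fixing every integer outside $[a,n]$, one-line notation $[w(a),\dots,w(n)]$; $\tau_{i,j}$ swaps $i<j$, $u\tau_{i,j}=u\circ\tau_{i,j}$; $\ell(u)$ = number of inversions; $u\lessdot_k u\tau_{i,j}$ if $i\le k<j$ and $\ell(u\tau_{i,j})=\ell(u)+1$; $u\xrightarrow{k}w$ if there is a chain $u=v_1\lessdot_k\cdots\lessdot_k v_s=w$ ($s\ge1$), $v_{t+1}=v_t\tau_{i_t,j_t}$, with $v_1(i_1)<\cdots<v_{s-1}(i_{s-1})$. For $\beta=(\beta_1,\dots,\beta_m)$, $C(u,w,\beta)$ is the set of $(v_1,\dots,v_{m+1})$ with $v_1=u$, $v_{m+1}=w$, $v_i\xrightarrow{\beta_i}v_{i+1}$. Setting: fix $a\le0<n$ and $A=\{(r,c):1\le r\le n,\ a\le c\le r\}$. Let $\gamma=(\gamma_N,\gamma_E,\gamma_S,\gamma_W)$ be a boundary condition of $A$: $\gamma_N(c)$ ($c\in[a,n]$) is the label of the pipe entering through the top edge of the top cell $(\max(c,1),c)$ of column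 $c$ or $\varnothing$; $\gamma_E(r)$ that of the pipe entering through the right edge of $(r,r)$ or $\varnothing$; $\gamma_S(c)$ that of the pipe exiting through the bottom edge of $(n,c)$ or $\varnothing$; $\gamma_W(r)$ that of the pipe exiting through the left edge of $(r,a)$ or $\varnothing$. Assume $\gamma_S(c)\ne\varnothing$ for $c\in[a,n]$, $\gamma_W(r)=\varnothing$ and $\gamma_N(r)\ne\varnothing$ for $r\in[n]$, and the non-$\varnothing$ values of $\gamma_N,\gamma_E$ are exactly $a,\dots,n$, increasing along the order: top edges of columns $a,\dots,1$, right edge of row 1, top edge of column 2, right edge of row 2, …, top edge of column $n$, right edge of row $n$ (the values of $\gamma_S$ are then also exactly $a,\dots,n$). Put $p_c=\gamma_N(c)$ ($c\in[n]$), $\alpha_i=p_{i+1}-1$ for $i\in[n-1]$, $\alpha=(\alpha_1,\dots,\alpha_{n-1})$. $P_r=\{w\in S_{[a,n]}:w(p_j)=j\ \forall j\in(r,n]\}$; $\iota_r:P_r\to S_{[a,r]}$ deletes the values $r+1,\dots,n$ from one-line notation. $W\in P_1$: $\iota_1(W)(\ell)=\gamma_N^{-1}(\ell)$ for $\ell\in[a,p_1]$ and $\iota_1(W)$ decreasing on $(p_1,1]$. $U\in S_{[a,n]}$: $U(\ell)=\gamma_S^{-1}(\ell)$ for $\ell\in[a,n]$. *)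

theory Defs
  imports Main
begin

definition perm_on :: "int \<Rightarrow> int \<Rightarrow> (int \<Rightarrow> int) \<Rightarrow> bool" where
  "perm_on a n w \<longleftrightarrow> bij w \<and> (\<forall>x. (x < a \<or> n < x) \<longrightarrow> w x = x)"

definition tau :: "int \<Rightarrow> int \<Rightarrow> int \<Rightarrow> int" where
  "tau i j x = (if x = i then j else if x = j then i else x)"

definition inv_count :: "(int \<Rightarrow> int) \<Rightarrow> nat" where
  "inv_count u = card {(i, j). i < j \<and> u j < u i}"

definition kcover :: "int \<Rightarrow> (int \<Rightarrow> int) \<Rightarrow> int \<Rightarrow> int \<Rightarrow> bool" where
  "kcover k u i j \<longleftrightarrow> i \<le> k \<and> k < j \<and> inv_count (u \<circ> tau i j) = inv_count u + 1"

text \<open>u --k--> w: a chain v_1 = u, ..., v_s = w (s \<ge> 1) of k-covers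
  v_{t+1} = v_t tau_{i_t,j_t} with v_1(i_1) < ... < v_{s-1}(i_{s-1}).
  Lists are 0-indexed: vs ! t is v_{t+1}, ijs ! t is (i_{t+1}, j_{t+1}).\<close>
definition kchain :: "int \<Rightarrow> (int \<Rightarrow> int) \<Rightarrow> (int \<Rightarrow> int) \<Rightarrow> bool" where
  "kchain k u w \<longleftrightarrow>
    (\<exists>vs :: (int \<Rightarrow> int) list. \<exists>ijs :: (int \<times> int) list.
       length vs = Suc (length ijs) \<and> vs ! 0 = u \<and> last vs = w \<and>
       (\<forall>t < length ijs. kcover k (vs ! t) (fst (ijs ! t)) (snd (ijs ! t)) \<and>
                         vs ! Suc t = (vs ! t) \<circ> tau (fst (ijs ! t)) (snd (ijs ! t))) \<and>
       (\<forall>t. Suc t < length ijs \<longrightarrow>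
              (vs ! t) (fst (ijs ! t)) < (vs ! Suc t) (fst (ijs ! Suc t))))"

text \<open>Membership (v_1,...,v_{m+1}) \<in> C(u,w,beta), with beta indexed by 1..m and
  the tuple vs indexed by 1..m+1.\<close>
definition inC :: "(int \<Rightarrow> int) \<Rightarrow> (int \<Rightarrow> int) \<Rightarrow> int \<Rightarrow> (int \<Rightarrow> int) \<Rightarrow> (int \<Rightarrow> int \<Rightarrow> int) \<Rightarrow> bool" where
  "inC u w m beta vs \<longleftrightarrow> vs 1 = u \<and> vs (m + 1) = w \<and>
     (\<forall>i \<in> {1..m}. kchain (beta i) (vs i) (vs (i + 1)))"

text \<open>iota_r : P_r \<to> S_[a,r]: delete the values r+1,...,n from the one-line
  notation [w(a),...,w(n)]; the remaining word is the one-line notation on [a,r].\<close>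
definition iota_del :: "int \<Rightarrow> int \<Rightarrow> int \<Rightarrow> (int \<Rightarrow> int) \<Rightarrow> int \<Rightarrow> int" where
  "iota_del a n r w l =
     (if a \<le> l \<and> l \<le> r then filter (\<lambda>v. v \<le> r) (map w [a..n]) ! nat (l - a) else l)"

text \<open>Boundary edges of the incoming boundary (top edges of columns, right edges of rows)
  in the order: columns a,...,1, row 1, column 2, row 2, ..., column n, row n.
  Inl c = top edge of column c, Inr r = right edge of row r.\<close>
definition bd_edges :: "int \<Rightarrow> int \<Rightarrow> (int + int) list" where
  "bd_edges a n = map Inl [a..1] @ concat (map (\<lambda>r. [Inr r, Inl (r + 1)]) [1..n - 1]) @ [Inr n]"

definition bd_label :: "(int \<Rightarrow> int option) \<Rightarrow> (int \<Rightarrow> int option) \<Rightarrow> int + int \<Rightarrow> int option" where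
  "bd_label gN gE e = (case e of Inl c \<Rightarrow> gN c | Inr r \<Rightarrow> gE r)"

end

theory Submission
  imports Defs
begin


definition fixout :: "int \<Rightarrow> int \<Rightarrow> (int \<Rightarrow> int) \<Rightarrow> bool" where
  "fixout L R v \<longleftrightarrow> (\<forall>x. (x < L \<or> R < x) \<longrightarrow> v x = x)"

lemma fixout_maps:
  assumes "bij v" "fixout L R v" "L \<le> x" "x \<le> R"
  shows "L \<le> v x \<and> v x \<le> R"
proof (rule ccontr)
  assume nt: "\<not> ?thesis"
  then have "v (v x) = v x" using assms(2) unfolding fixout_def by auto
  then have "v x = x" using assms(1) by (metis bij_pointE)
  then show False using nt assms by auto
qed

lemma inv_finite:
  assumes "bij v" "fixout L R v"
  shows "finite {(i, j). i < j \<and> v j < v i}"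
proof -
  have "{(i, j). i < j \<and> v j < v i} \<subseteq> {L..R} \<times> {L..R}"
  proof (rule subsetI)
    fix q assume "q \<in> {(i, j). i < j \<and> v j < v i}"
    then obtain i j where q: "q = (i, j)" and h: "i < j" "v j < v i" by auto
    have fi: "i < L \<or> R < i \<Longrightarrow> v i = i" and fj: "j < L \<or> R < j \<Longrightarrow> v j = j"
      using assms(2) unfolding fixout_def by auto
    have mi: "L \<le> i \<Longrightarrow> i \<le> R \<Longrightarrow> L \<le> v i \<and> v i \<le> R"
      and mj: "L \<le> j \<Longrightarrow> j \<le> R \<Longrightarrow> L \<le> v j \<and> v j \<le> R"
      using fixout_maps[OF assms] by auto
    have "L \<le> i" using h fi fj mj by (cases "j < L \<or> R < j") force+
    moreover have "i \<le> R" using h fi fj mj by (cases "j < L \<or> R < j") force+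
    moreover have "L \<le> j" using h fi fj mi by (cases "i < L \<or> R < i") force+
    moreover have "j \<le> R" using h fi fj mi by (cases "i < L \<or> R < i") force+
    ultimately show "q \<in> {L..R} \<times> {L..R}" using q by auto
  qed
  then show ?thesis by (rule finite_subset) auto
qed

lemma cover_lt:
  assumes "bij v" "fixout L R v" "s < t"
    and ic: "inv_count (v \<circ> tau s t) = inv_count v + 1"
  shows "v s < v t"
proof (rule ccontr)
  assume "\<not> v s < v t"
  moreover have "v s \<noteq> v t" using assms(1,3) by (metis bij_pointE less_irrefl)
  ultimately have gt: "v t < v s" by auto
  define I1 where "I1 = {(i, j). i < j \<and> (v \<circ> tau s t) j < (v \<circ> tau s t) i}"
  define I0 where "I0 = {(i, j). i < j \<and> v j < v i}"
  define f where "f = (\<lambda>(i,j). if tau s t i < tau s t j then (tau s t i, tau s t j) else (i, j))"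
  have fin: "finite I0" unfolding I0_def by (rule inv_finite[OF assms(1,2)])
  have st: "(s, t) \<in> I0" using gt assms(3) unfolding I0_def by auto
  have inj: "inj_on f I1"
    unfolding inj_on_def f_def I1_def tau_def by (auto split: if_splits)
  have sub: "f ` I1 \<subseteq> I0 - {(s, t)}"
  proof
    fix q assume "q \<in> f ` I1"
    then obtain i j where ij: "(i, j) \<in> I1" "q = f (i, j)" by auto
    then show "q \<in> I0 - {(s, t)}"
      using gt assms(3) unfolding I1_def I0_def f_def tau_def
      by (auto split: if_splits)
  qed
  have "card I1 = card (f ` I1)" using inj by (simp add: card_image)
  also have "\<dots> \<le> card (I0 - {(s, t)})" using sub fin by (intro card_mono) auto
  also have "\<dots> < card I0" using fin st by (metis card_Diff1_less)
  finally have "card I1 < card I0" .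
  moreover have "card I1 = card I0 + 1" using ic unfolding inv_count_def I1_def I0_def by simp
  ultimately show False by simp
qed

lemma seq_props:
  fixes f :: "nat \<Rightarrow> int \<Rightarrow> int" and s t :: "nat \<Rightarrow> int"
  assumes step: "\<And>m. m < N \<Longrightarrow> s m \<le> k \<and> k < t m \<and>
      inv_count (f m \<circ> tau (s m) (t m)) = inv_count (f m) + 1 \<and> f (Suc m) = f m \<circ> tau (s m) (t m)"
    and b0: "bij (f 0)" and fo0: "fixout L R (f 0)"
  shows "bij (f N) \<and> (\<exists>L' R'. fixout L' R' (f N))
     \<and> (\<forall>x\<le>k. f 0 x \<le> f N x) \<and> (\<forall>x>k. f N x \<le> f 0 x)
     \<and> (\<forall>c. (\<forall>x\<le>k. f N x \<le> c) \<longrightarrow> (\<forall>i>c. \<forall>y. (f 0 y = i) = (f N y = i)))"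
proof -
  have bf: "m \<le> N \<Longrightarrow> bij (f m) \<and> (\<exists>L' R'. fixout L' R' (f m))" for m
  proof (induction m)
    case 0 then show ?case using b0 fo0 by auto
  next
    case (Suc m)
    then obtain L' R' where b: "bij (f m)" and fo: "fixout L' R' (f m)" by auto
    have sm: "s m \<le> k" "k < t m" and fs: "f (Suc m) = f m \<circ> tau (s m) (t m)" using step[of m] Suc by auto
    have "bij (tau (s m) (t m))"
      unfolding bij_def inj_def surj_def tau_def by auto (metis)
    then have "bij (f (Suc m))" using fs b by (simp add: bij_comp)
    moreover have "fixout (min L' (s m)) (max R' (t m)) (f (Suc m))"
      using fo sm unfolding fs fixout_def tau_def by auto
    ultimately show ?case by blast
  qed
  have lt: "m < N \<Longrightarrow> f m (s m) < f m (t m)" for m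
  proof -
    assume "m < N"
    then obtain L' R' where "bij (f m)" "fixout L' R' (f m)" using bf by fastforce
    then show ?thesis using cover_lt step[OF \<open>m < N\<close>] by fastforce
  qed
  have up: "m < N \<Longrightarrow> x \<le> k \<Longrightarrow> f m x \<le> f (Suc m) x" for m x
    using lt[of m] step[of m] unfolding tau_def by auto
  have dn: "m < N \<Longrightarrow> x > k \<Longrightarrow> f (Suc m) x \<le> f m x" for m x
    using lt[of m] step[of m] unfolding tau_def by auto
  have upc: "m + d \<le> N \<Longrightarrow> x \<le> k \<Longrightarrow> f m x \<le> f (m + d) x" for m d x
  proof (induction d)
    case (Suc d) then show ?case using up[of "m + d" x] by auto
  qed simp
  have dnc: "m + d \<le> N \<Longrightarrow> x > k \<Longrightarrow> f (m + d) x \<le> f m x" for m d x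
  proof (induction d)
    case (Suc d) then show ?case using dn[of "m + d" x] by auto
  qed simp
  have last: "\<forall>c. (\<forall>x\<le>k. f N x \<le> c) \<longrightarrow> (\<forall>i>c. \<forall>y. (f 0 y = i) = (f N y = i))"
  proof (intro allI impI)
    fix c i y assume hc: "\<forall>x\<le>k. f N x \<le> c" and ic: "c < i"
    have bnd: "m \<le> N \<Longrightarrow> x \<le> k \<Longrightarrow> f m x \<le> c" for m x
      using upc[of m "N - m" x] hc by auto
    have st: "m < N \<Longrightarrow> (f m y = i) = (f (Suc m) y = i)" for m
    proof -
      assume m: "m < N"
      have a1: "f m (s m) \<le> c" using bnd[of m "s m"] step[OF m] m by auto
      have a2: "f (Suc m) (s m) \<le> c" using bnd[of "Suc m" "s m"] step[OF m] m by auto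
      have a3: "f m (t m) \<le> c" using a2 step[OF m] unfolding tau_def by auto
      have a4: "f (Suc m) (t m) \<le> c" using a1 step[OF m] unfolding tau_def by auto
      show ?thesis using a1 a2 a3 a4 ic step[OF m] unfolding tau_def by auto
    qed
    have "m \<le> N \<Longrightarrow> (f 0 y = i) = (f m y = i)" for m
      by (induction m) (use st in auto)
    then show "(f 0 y = i) = (f N y = i)" by simp
  qed
  show ?thesis using bf[of N] upc[of 0 N] dnc[of 0 N] last by auto
qed

lemma kchain_props:
  assumes "kchain k v w" "bij v" "fixout L R v"
  shows "bij w \<and> (\<exists>L' R'. fixout L' R' w)
     \<and> (\<forall>x\<le>k. v x \<le> w x) \<and> (\<forall>x>k. w x \<le> v x)
     \<and> (\<forall>c. (\<forall>x\<le>k. w x \<le> c) \<longrightarrow> (\<forall>i>c. \<forall>y. (v y = i) = (w y = i)))"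
proof -
  obtain vs :: "(int \<Rightarrow> int) list" and ijs :: "(int \<times> int) list" where
    h: "length vs = Suc (length ijs)" "vs ! 0 = v" "last vs = w"
      "\<forall>t < length ijs. kcover k (vs ! t) (fst (ijs ! t)) (snd (ijs ! t)) \<and>
                         vs ! Suc t = (vs ! t) \<circ> tau (fst (ijs ! t)) (snd (ijs ! t))"
    using assms(1) unfolding kchain_def by blast
  have lw: "vs ! length ijs = w" using h(1,3) by (metis diff_Suc_1 last_conv_nth list.size(3) nat.distinct(1))
  have "bij (vs ! length ijs) \<and> (\<exists>L' R'. fixout L' R' (vs ! length ijs))
     \<and> (\<forall>x\<le>k. (vs ! 0) x \<le> (vs ! length ijs) x) \<and> (\<forall>x>k. (vs ! length ijs) x \<le> (vs ! 0) x)
     \<and> (\<forall>c. (\<forall>x\<le>k. (vs ! length ijs) x \<le> c) \<longrightarrow> (\<forall>i>c. \<forall>y. ((vs ! 0) y = i) = ((vs ! length ijs) y = i)))"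
    apply (rule seq_props[where f = "\<lambda>m. vs ! m" and s = "\<lambda>m. fst (ijs ! m)" and t = "\<lambda>m. snd (ijs ! m)" and L = L and R = R])
    using h(4) unfolding kcover_def apply auto[1]
    using h(2) assms by auto
  then show ?thesis using lw h(2) by simp
qed



lemma mf_order:
  assumes "sorted_wrt (<) (List.map_filter g (A @ x # B))" "g x = Some (v1::int)"
    "y \<in> set B" "g y = Some v2"
  shows "v1 < v2"
proof -
  have e: "List.map_filter g (A @ x # B) = List.map_filter g A @ v1 # List.map_filter g B"
    using assms(2) by (simp add: map_filter_def)
  have "v2 \<in> set (List.map_filter g B)" using assms(3,4) unfolding map_filter_def
    by (force simp: image_iff)
  then show ?thesis using assms(1) unfolding e by (auto simp: sorted_wrt_append)
qed

lemma mf_mem: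
  assumes "y \<in> set B" "g y = Some v2"
  shows "v2 \<in> set (List.map_filter g B)"
  using assms unfolding map_filter_def by (force simp: image_iff)

lemma bd_decomp:
  assumes "a \<le> 0" "1 \<le> c" "c < n"
  shows "\<exists>A B. bd_edges a n = A @ Inl c # B \<and> Inl (c + 1) \<in> set B"
proof (cases "c = 1")
  case True
  have "[a..1] = [a..0] @ [1]" using assms upto_rec2[of a 1] by simp
  moreover have "Inl 2 \<in> set (concat (map (\<lambda>r. [Inr r, Inl (r + 1)]) [1..n - 1]))"
    using assms True by force
  ultimately show ?thesis unfolding bd_edges_def using True
    by (intro exI[of _ "map Inl [a..0]"] exI[of _ "concat (map (\<lambda>r. [Inr r, Inl (r + 1)]) [1..n - 1]) @ [Inr n]"]) auto
next
  case False
  define f where "f = (\<lambda>r::int. [Inr r, Inl (r + 1) :: int + int])"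
  have sp: "[1..n-1] = [1..c-2] @ (c-1) # [c..n-1]" using upto_split3[of 1 "c-1" "n-1"] assms False by simp
  have "Inl (c+1) \<in> set (concat (map f [c..n - 1]))" using assms unfolding f_def by force
  moreover have "bd_edges a n = (map Inl [a..1] @ concat (map f [1..c-2]) @ [Inr (c-1)]) @ Inl c # (concat (map f [c..n - 1]) @ [Inr n])"
    unfolding bd_edges_def f_def[symmetric] sp by (simp add: f_def)
  ultimately show ?thesis by fastforce
qed

lemma p_facts:
  fixes a n :: int and gN gE :: "int \<Rightarrow> int option" and p :: "int \<Rightarrow> int"
  assumes a_le: "a \<le> 0" and n_pos: "0 < n"
    and gN_def: "\<forall>r \<in> {1..n}. gN r \<noteq> None"
    and in_order: "List.map_filter (bd_label gN gE) (bd_edges a n) = [a..n]"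
    and p_def: "\<forall>c. p c = the (gN c)"
  shows "(\<forall>c\<in>{1..n}. gN c = Some (p c) \<and> a \<le> p c \<and> p c \<le> n)
       \<and> (\<forall>i j. 1 \<le> i \<longrightarrow> i < j \<longrightarrow> j \<le> n \<longrightarrow> p i < p j)"
proof -
  have gs: "c \<in> {1..n} \<Longrightarrow> gN c = Some (p c)" for c using gN_def p_def by auto
  have mem: "c \<in> {1..n} \<Longrightarrow> Inl c \<in> set (bd_edges a n)" for c
  proof -
    assume c: "c \<in> {1..n}"
    show ?thesis
    proof (cases "c = 1")
      case True then show ?thesis using a_le unfolding bd_edges_def by auto
    next
      case False
      then have "c - 1 \<in> set [1..n-1]" using c by auto
      then have "Inl c \<in> set (concat (map (\<lambda>r. [Inr r, Inl (r + 1) :: int + int]) [1..n - 1]))"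
        by (force intro: bexI[of _ "c - 1"])
      then show ?thesis unfolding bd_edges_def by auto
    qed
  qed
  have rng: "c \<in> {1..n} \<Longrightarrow> a \<le> p c \<and> p c \<le> n" for c
    using mf_mem[OF mem, of c "bd_label gN gE" "p c"] gs[of c] in_order by (auto simp: bd_label_def)
  have adj: "1 \<le> c \<Longrightarrow> c < n \<Longrightarrow> p c < p (c + 1)" for c
  proof -
    assume c: "1 \<le> c" "c < n"
    obtain A B where "bd_edges a n = A @ Inl c # B" "Inl (c + 1) \<in> set B" using bd_decomp[OF a_le c] by blast
    then show ?thesis using mf_order[of "bd_label gN gE" A "Inl c" B "p c" "Inl (c+1)" "p (c+1)"]
      in_order gs[of c] gs[of "c+1"] c by (auto simp: bd_label_def)
  qed
  have mono: "1 \<le> i \<Longrightarrow> i + int d + 1 \<le> n \<Longrightarrow> p i < p (i + int d + 1)" for i d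
  proof (induction d)
    case 0 then show ?case using adj[of i] by simp
  next
    case (Suc d) then show ?case using adj[of "i + int d + 1"] by (simp add: add.commute add.left_commute)
  qed
  have "\<forall>i j. 1 \<le> i \<longrightarrow> i < j \<longrightarrow> j \<le> n \<longrightarrow> p i < p j"
  proof (intro allI impI)
    fix i j :: int assume h: "1 \<le> i" "i < j" "j \<le> n"
    then show "p i < p j" using mono[of i "nat (j - i - 1)"] by simp
  qed
  then show ?thesis using gs rng by auto
qed



lemma iota_eq:
  assumes "a \<le> x" "x \<le> n" "x \<le> r" "\<forall>y\<in>{a..x}. W y \<le> r"
  shows "iota_del a n r W x = W x"
proof -
  have sp: "[a..n] = [a..x] @ [x+1..n]" using upto_split2[of a x n] assms by simp
  have f1: "filter (\<lambda>v. v \<le> r) (map W [a..x]) = map W [a..x]"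
    using assms(4) by (auto intro: filter_True)
  have len: "nat (x - a) < length (map W [a..x])" using assms by simp
  have "filter (\<lambda>v. v \<le> r) (map W [a..n]) ! nat (x - a) = map W [a..x] ! nat (x - a)"
    unfolding sp map_append filter_append f1 using len by (simp add: nth_append)
  also have "\<dots> = W x" using len assms by simp
  finally show ?thesis using assms unfolding iota_del_def by simp
qed

lemma up_chain:
  fixes g :: "int \<Rightarrow> int"
  assumes "\<And>m. lo \<le> m \<Longrightarrow> m < hi \<Longrightarrow> g m \<le> g (m + 1)" "lo \<le> hi"
  shows "g lo \<le> g hi"
proof -
  have "lo + int d \<le> hi \<Longrightarrow> g lo \<le> g (lo + int d)" for d
  proof (induction d)
    case (Suc d)
    have e: "lo + int (Suc d) = lo + int d + 1" by simp
    have "lo + int d \<le> hi" "lo + int d < hi" using Suc.prems by auto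
    then have "g lo \<le> g (lo + int d)" "g (lo + int d) \<le> g (lo + int d + 1)"
      using Suc.IH assms(1)[of "lo + int d"] by auto
    then show ?case unfolding e by linarith
  qed simp
  from this[of "nat (hi - lo)"] show ?thesis using assms(2) by simp
qed



theorem lemma4p28:
  fixes a n :: int
    and gN gE gS gW :: "int \<Rightarrow> int option"
    and U W :: "int \<Rightarrow> int"
    and u :: "int \<Rightarrow> int \<Rightarrow> int"
    and p alpha :: "int \<Rightarrow> int"
  assumes a_le: "a \<le> 0" and n_pos: "0 < n"
    and gS_def: "\<forall>c \<in> {a..n}. gS c \<noteq> None"
    and gW_none: "\<forall>r \<in> {1..n}. gW r = None"
    and gN_def: "\<forall>r \<in> {1..n}. gN r \<noteq> None"
    and in_order: "List.map_filter (bd_label gN gE) (bd_edges a n) = [a..n]"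
    and gS_vals: "bij_betw (\<lambda>c. the (gS c)) {a..n} {a..n}"
    and p_def: "\<forall>c. p c = the (gN c)"
    and alpha_def: "\<forall>i. alpha i = p (i + 1) - 1"
    and U_perm: "perm_on a n U"
    and U_def: "\<forall>l \<in> {a..n}. gS (U l) = Some l"
    and W_perm: "perm_on a n W"
    and W_P1: "\<forall>j \<in> {2..n}. W (p j) = j"
    and W_init: "\<forall>l \<in> {a..p 1}. iota_del a n 1 W l \<in> {a..n} \<and> gN (iota_del a n 1 W l) = Some l"
    and W_dec: "\<forall>x y. p 1 < x \<longrightarrow> x < y \<longrightarrow> y \<le> 1 \<longrightarrow> iota_del a n 1 W y < iota_del a n 1 W x"
    and u_C: "inC U W (n - 1) alpha u"
  shows "(\<forall>i \<in> {1..n}. \<forall>j \<in> {0..min i (n - 1)}. u i ` {a..alpha j} \<subseteq> {a..j})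
       \<and> (\<forall>i \<in> {1..n}. p i \<le> inv (u i) i)
       \<and> (\<forall>i \<in> {1..n}. \<forall>k \<in> {1..i}. inv (u k) i = inv (u 1) i)"
proof -
  note pf = p_facts[OF a_le n_pos gN_def in_order p_def]
  have gsp: "\<And>c. c \<in> {1..n} \<Longrightarrow> gN c = Some (p c) \<and> a \<le> p c \<and> p c \<le> n" using pf by blast
  have pm: "\<And>i j. 1 \<le> i \<Longrightarrow> i < j \<Longrightarrow> j \<le> n \<Longrightarrow> p i < p j" using pf by blast
  have pmle: "\<And>i j. 1 \<le> i \<Longrightarrow> i \<le> j \<Longrightarrow> j \<le> n \<Longrightarrow> p i \<le> p j"
    using pm by (metis order_le_less)
  have u1: "u 1 = U" and un: "u n = W" and ch: "\<And>i. i \<in> {1..n-1} \<Longrightarrow> kchain (alpha i) (u i) (u (i + 1))"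
    using u_C unfolding inC_def by auto
  have al: "\<And>i. i \<in> {1..n-1} \<Longrightarrow> a \<le> alpha i \<and> alpha i < n"
  proof -
    fix i assume i: "i \<in> {1..n-1}"
    have "p 1 < p (i + 1)" using pm[of 1 "i+1"] i by auto
    moreover have "a \<le> p 1" "p (i + 1) \<le> n" using gsp[of 1] gsp[of "i+1"] i n_pos by auto
    ultimately show "a \<le> alpha i \<and> alpha i < n" using alpha_def by auto
  qed
  have Ub: "bij U" "fixout a n U" using U_perm unfolding perm_on_def fixout_def by auto
  have Wb: "bij W" "fixout a n W" using W_perm unfolding perm_on_def fixout_def by auto
  have F1n: "1 + int d \<le> n \<Longrightarrow> bij (u (1 + int d)) \<and> (\<exists>L R. fixout L R (u (1 + int d)))" for d
  proof (induction d)
    case 0 then show ?case using Ub u1 by auto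
  next
    case (Suc d)
    then obtain L R where b: "bij (u (1 + int d))" "fixout L R (u (1 + int d))" by auto
    have "kchain (alpha (1 + int d)) (u (1 + int d)) (u (1 + int d + 1))" using ch[of "1 + int d"] Suc.prems by auto
    from kchain_props[OF this b] show ?case by (simp add: add.commute add.left_commute)
  qed
  have F1: "\<And>i. i \<in> {1..n} \<Longrightarrow> bij (u i) \<and> (\<exists>L R. fixout L R (u i))"
  proof -
    fix i assume "i \<in> {1..n}"
    then show "bij (u i) \<and> (\<exists>L R. fixout L R (u i))" using F1n[of "nat (i - 1)"] by auto
  qed
  have F2a: "\<And>i x. i \<in> {1..n-1} \<Longrightarrow> x \<le> alpha i \<Longrightarrow> u i x \<le> u (i + 1) x"
    and F2b: "\<And>i x. i \<in> {1..n-1} \<Longrightarrow> alpha i < x \<Longrightarrow> u (i + 1) x \<le> u i x"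
    and F2c: "\<And>i c k y. i \<in> {1..n-1} \<Longrightarrow> (\<forall>x\<le>alpha i. u (i + 1) x \<le> c) \<Longrightarrow> c < k \<Longrightarrow> (u i y = k) = (u (i + 1) y = k)"
  proof -
    fix i assume i: "i \<in> {1..n-1}"
    then obtain L R where "bij (u i)" "fixout L R (u i)" using F1[of i] by auto
    note kp = kchain_props[OF ch[OF i] this]
    {
      fix x assume "x \<le> alpha i" then show "u i x \<le> u (i + 1) x" using kp by blast
    next
      fix x assume "alpha i < x" then show "u (i + 1) x \<le> u i x" using kp by blast
    next
      fix c k y assume "\<forall>x\<le>alpha i. u (i + 1) x \<le> c" "c < k"
      then show "(u i y = k) = (u (i + 1) y = k)" using kp by blast
    }
  qed
  have F3: "\<And>i x. i \<in> {1..n} \<Longrightarrow> (x < a \<or> n < x) \<Longrightarrow> u i x = x"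
  proof -
    fix i x assume i: "i \<in> {1..n}" and x: "x < a \<or> n < x"
    show "u i x = x"
    proof (cases "x < a")
      case True
      have st: "u m x \<le> u (m + 1) x" if "1 \<le> m" "m < n" for m
      proof -
        have m: "m \<in> {1..n-1}" using that by auto
        then have "x \<le> alpha m" using al[OF m] True by auto
        then show ?thesis using F2a[OF m] by blast
      qed
      have "u 1 x \<le> u i x"
        by (rule up_chain[where g = "\<lambda>m. u m x"]) (use i st in auto)
      moreover have "u i x \<le> u n x"
        by (rule up_chain[where g = "\<lambda>m. u m x"]) (use i st in auto)
      moreover have "U x = x" "W x = x" using Ub(2) Wb(2) True unfolding fixout_def by auto
      ultimately show ?thesis using u1 un by auto
    next
      case False
      then have xn: "n < x" using x by auto
      have st: "- u m x \<le> - u (m + 1) x" if "1 \<le> m" "m < n" for m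
      proof -
        have m: "m \<in> {1..n-1}" using that by auto
        then have "alpha m < x" using al[OF m] xn by auto
        then show ?thesis using F2b[OF m] by simp
      qed
      have "- u 1 x \<le> - u i x"
        by (rule up_chain[where g = "\<lambda>m. - u m x"]) (use i st in auto)
      moreover have "- u i x \<le> - u n x"
        by (rule up_chain[where g = "\<lambda>m. - u m x"]) (use i st in auto)
      moreover have "U x = x" "W x = x" using Ub(2) Wb(2) xn unfolding fixout_def by auto
      ultimately show ?thesis using u1 un by auto
    qed
  qed
  have F4: "\<And>i. i \<in> {1..n} \<Longrightarrow> bij (u i) \<and> fixout a n (u i)"
    using F1 F3 unfolding fixout_def by blast
  have Wbound: "\<And>j x. j \<in> {0..n-1} \<Longrightarrow> x \<in> {a..alpha j} \<Longrightarrow> W x \<le> j"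
  proof -
    fix j x assume j: "j \<in> {0..n-1}" and x: "x \<in> {a..alpha j}"
    have aj: "alpha j = p (j + 1) - 1" using alpha_def by auto
    have xn: "x \<le> n" using gsp[of "j+1"] j x aj by auto
    have Wr: "a \<le> W x \<and> W x \<le> n" using fixout_maps[OF Wb, of x] x xn by auto
    have big: "\<And>y. y \<in> {a..n} \<Longrightarrow> 2 \<le> W y \<Longrightarrow> y = p (W y)"
    proof -
      fix y assume y: "y \<in> {a..n}" "2 \<le> W y"
      have "W y \<le> n" using fixout_maps[OF Wb, of y] y by auto
      then have "W (p (W y)) = W y" using W_P1 y by auto
      then show "y = p (W y)" using Wb(1) by (metis bij_pointE)
    qed
    show "W x \<le> j"
    proof (cases "2 \<le> W x")
      case True
      have xe: "x = p (W x)" using big[of x] True x xn by auto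
      show ?thesis
      proof (rule ccontr)
        assume "\<not> W x \<le> j"
        then have "p (j + 1) \<le> p (W x)" using pmle[of "j+1" "W x"] j Wr by auto
        then show False using xe x aj by auto
      qed
    next
      case False
      show ?thesis
      proof (cases "j = 0")
        case False2: False
        then show ?thesis using False j by auto
      next
        case True
        have xp: "x < p 1" using x aj True by auto
        have Wi: "iota_del a n 1 W x \<in> {a..n} \<and> gN (iota_del a n 1 W x) = Some x"
          using W_init x xp by auto
        have x1: "x \<le> 1"
        proof (rule ccontr)
          assume "\<not> x \<le> 1"
          then have "iota_del a n 1 W x = x" unfolding iota_del_def by auto
          then have "gN x = Some x" "x \<in> {2..n}" using Wi \<open>\<not> x \<le> 1\<close> xn by auto
          then have "p x = x" using p_def by auto
          moreover have "p 1 < p x" using pm[of 1 x] \<open>x \<in> {2..n}\<close> by auto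
          ultimately show False using xp by auto
        qed
        have small: "\<forall>y\<in>{a..x}. W y \<le> 1"
        proof
          fix y assume y: "y \<in> {a..x}"
          show "W y \<le> 1"
          proof (rule ccontr)
            assume "\<not> W y \<le> 1"
            then have "2 \<le> W y" by auto
            moreover have "W y \<le> n" using fixout_maps[OF Wb, of y] y xn by auto
            ultimately have "y = p (W y)" "p 1 < p (W y)" using big[of y] y xn pm[of 1 "W y"] by auto
            then show False using y xp by auto
          qed
        qed
        have "iota_del a n 1 W x = W x" using iota_eq[of a x n 1 W] x xn x1 small by auto
        then have "gN (W x) = Some x" using Wi by auto
        then have "W x \<noteq> 1" using gsp[of 1] n_pos xp by auto
        then show ?thesis using False True by auto
      qed
    qed
  qed
  have P1: "\<forall>i \<in> {1..n}. \<forall>j \<in> {0..min i (n - 1)}. u i ` {a..alpha j} \<subseteq> {a..j}"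
  proof (intro ballI subsetI)
    fix i j y assume i: "i \<in> {1..n}" and j: "j \<in> {0..min i (n - 1)}" and y: "y \<in> u i ` {a..alpha j}"
    then obtain x where x: "x \<in> {a..alpha j}" and yx: "y = u i x" by auto
    have aj: "alpha j = p (j + 1) - 1" using alpha_def by auto
    have xn: "x \<le> n" using gsp[of "j+1"] j x aj by auto
    have lo: "a \<le> u i x" using fixout_maps[of "u i" a n x] F4[OF i] x xn by auto
    have "u i x \<le> u n x"
    proof (rule up_chain[where g = "\<lambda>m. u m x"])
      fix m assume m: "i \<le> m" "m < n"
      then have "m \<in> {1..n-1}" using i by auto
      moreover have "x \<le> alpha m"
        using x aj alpha_def pmle[of "j+1" "m+1"] j m by auto
      ultimately show "u m x \<le> u (m + 1) x" using F2a by blast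
    qed (use i in auto)
    then have "u i x \<le> j" using Wbound[of j x] j x un by auto
    then show "y \<in> {a..j}" using lo yx by auto
  qed
  have P2: "\<forall>i \<in> {1..n}. p i \<le> inv (u i) i"
  proof
    fix i assume i: "i \<in> {1..n}"
    define y where "y = inv (u i) i"
    have uy: "u i y = i" unfolding y_def using F4[OF i] by (meson bij_inv_eq_iff)
    show "p i \<le> inv (u i) i"
    proof (rule ccontr)
      assume "\<not> p i \<le> inv (u i) i"
      then have yl: "y < p i" unfolding y_def by auto
      show False
      proof (cases "y < a")
        case True
        then show False using F3[OF i, of y] uy a_le i by auto
      next
        case False
        have "alpha (i - 1) = p i - 1" using alpha_def by auto
        then have "y \<in> {a..alpha (i - 1)}" using False yl by auto
        moreover have "i - 1 \<in> {0..min i (n - 1)}" using i by auto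
        ultimately have "u i y \<in> {a..i - 1}" using P1 i by blast
        then show False using uy by auto
      qed
    qed
  qed
  have P3: "\<forall>i \<in> {1..n}. \<forall>k \<in> {1..i}. inv (u k) i = inv (u 1) i"
  proof (intro ballI)
    fix i k assume i: "i \<in> {1..n}" and k: "k \<in> {1..i}"
    have stp: "inv (u m) i = inv (u (m + 1)) i" if m: "1 \<le> m" "m < i" for m
    proof -
      have mr: "m \<in> {1..n-1}" using m i by auto
      have bd: "\<forall>x\<le>alpha m. u (m + 1) x \<le> m"
      proof (intro allI impI)
        fix x assume x: "x \<le> alpha m"
        show "u (m + 1) x \<le> m"
        proof (cases "x < a")
          case True
          then show ?thesis using F3[of "m+1" x] mr a_le m by auto
        next
          case False
          have "m \<in> {0..min (m + 1) (n - 1)}" using mr by auto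
          moreover have "m + 1 \<in> {1..n}" using mr by auto
          ultimately have "u (m + 1) ` {a..alpha m} \<subseteq> {a..m}" using P1 by blast
          moreover have "x \<in> {a..alpha m}" using x False by auto
          ultimately have "u (m + 1) x \<in> {a..m}" by blast
          then show ?thesis by simp
        qed
      qed
      have "\<forall>y. (u m y = i) = (u (m + 1) y = i)" using F2c[OF mr bd] m by auto
      then show ?thesis unfolding inv_def inv_into_def by simp
    qed
    have "inv (u 1) i \<le> inv (u k) i"
      by (rule up_chain[where g = "\<lambda>m. inv (u m) i"]) (use stp k in auto)
    moreover have "- inv (u 1) i \<le> - inv (u k) i"
      by (rule up_chain[where g = "\<lambda>m. - inv (u m) i"]) (use stp k in auto)
    ultimately show "inv (u k) i = inv (u 1) i" by auto
  qed
  show ?thesis using P1 P2 P3 by blast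
qed


end
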